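(* If $X$ is a Tychonoff $P$-space, then $T''(X)$ is a (Von Neumann) regular ring.
   Context: $C(X)$ is the ring of real-valued continuous functions on $X$; a cozero set is a set $\{x: h(x)\neq 0\}$ with $h\in C(X)$. $T''(X)$ is the ring (under pointwise operations) of all functions $f\colon X\to\mathbb{R}$ for which there is a dense cozero set $U$ of $X$ with $f|_U$ continuous. A commutative ring $R$ is regular if for each $a\in R$ there is $x\in R$ with $a=a^2x$. A $P$-space is a Tychonoff space in which every zero set is open. *)

theory Defs
  imports "HOL-Analysis.Analysis" "HOL-Algebra.Ring"
begin

definition Tychonoff_space :: "'a topology \<Rightarrow> bool" where
  "Tychonoff_space X \<longleftrightarrow> completely_regular_space X \<and> Hausdorff_space X"

definition cozero_set :: "'a topology \<Rightarrow> 'a set \<Rightarrow> bool" where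
  "cozero_set X U \<longleftrightarrow> (\<exists>h. continuous_map X euclideanreal h \<and> U = {x \<in> topspace X. h x \<noteq> 0})"

definition zero_set :: "'a topology \<Rightarrow> 'a set \<Rightarrow> bool" where
  "zero_set X Z \<longleftrightarrow> (\<exists>h. continuous_map X euclideanreal h \<and> Z = {x \<in> topspace X. h x = 0})"

definition P_space :: "'a topology \<Rightarrow> bool" where
  "P_space X \<longleftrightarrow> Tychonoff_space X \<and> (\<forall>Z. zero_set X Z \<longrightarrow> openin X Z)"

text \<open>T''(X): functions X -> R continuous on some dense cozero set.
  Functions are represented extensionally (value 0 outside topspace X).\<close>
definition T2 :: "'a topology \<Rightarrow> ('a \<Rightarrow> real) set" where
  "T2 X = {f. (\<forall>x. x \<notin> topspace X \<longrightarrow> f x = 0) \<and>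
     (\<exists>U. cozero_set X U \<and> X closure_of U = topspace X \<and>
          continuous_map (subtopology X U) euclideanreal f)}"

definition T2_ring :: "'a topology \<Rightarrow> ('a \<Rightarrow> real) ring" where
  "T2_ring X = \<lparr> carrier = T2 X,
                 mult = (\<lambda>f g x. f x * g x),
                 one = (\<lambda>x. if x \<in> topspace X then 1 else 0),
                 zero = (\<lambda>x. 0),
                 add = (\<lambda>f g x. f x + g x) \<rparr>"

definition regular_ring :: "('b, 'c) ring_scheme \<Rightarrow> bool" where
  "regular_ring R \<longleftrightarrow> cring R \<and>
     (\<forall>a \<in> carrier R. \<exists>x \<in> carrier R. a = a \<otimes>\<^bsub>R\<^esub> a \<otimes>\<^bsub>R\<^esub> x)"

end

theory Submission
  imports Defs
begin

lemma cozero_closed: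
  assumes "P_space X" "cozero_set X U"
  shows "closedin X U"
proof -
  obtain h where h: "continuous_map X euclideanreal h" "U = {x \<in> topspace X. h x \<noteq> 0}"
    using assms(2) unfolding cozero_set_def by blast
  have "zero_set X {x \<in> topspace X. h x = 0}"
    unfolding zero_set_def using h(1) by blast
  hence "openin X {x \<in> topspace X. h x = 0}" using assms(1) unfolding P_space_def by blast
  moreover have "topspace X - U = {x \<in> topspace X. h x = 0}" using h(2) by auto
  ultimately show ?thesis unfolding closedin_def using h(2) by auto
qed

lemma T2_eq:
  assumes "P_space X"
  shows "T2 X = {f. (\<forall>x. x \<notin> topspace X \<longrightarrow> f x = 0) \<and> continuous_map X euclideanreal f}"
proof (intro equalityI subsetI)
  fix f assume "f \<in> T2 X"
  then obtain U where U: "\<forall>x. x \<notin> topspace X \<longrightarrow> f x = 0" "cozero_set X U"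
     "X closure_of U = topspace X" "continuous_map (subtopology X U) euclideanreal f"
    unfolding T2_def by blast
  have "closedin X U" using cozero_closed[OF assms U(2)] .
  hence "U = topspace X" using U(3) closure_of_closedin by metis
  thus "f \<in> {f. (\<forall>x. x \<notin> topspace X \<longrightarrow> f x = 0) \<and> continuous_map X euclideanreal f}"
    using U by simp
next
  fix f assume f: "f \<in> {f. (\<forall>x. x \<notin> topspace X \<longrightarrow> f x = 0) \<and> continuous_map X euclideanreal f}"
  have "cozero_set X (topspace X)"
    unfolding cozero_set_def by (rule exI[of _ "\<lambda>_. 1"]) auto
  thus "f \<in> T2 X" using f unfolding T2_def by auto
qed

theorem theorem3p0:
  fixes X :: "'a topology"
  assumes "Tychonoff_space X" and "P_space X"
  shows "regular_ring (T2_ring X)"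
proof -
  let ?C = "{f. (\<forall>x. x \<notin> topspace X \<longrightarrow> f x = 0) \<and> continuous_map X euclideanreal f}"
  have car: "carrier (T2_ring X) = ?C" using T2_eq[OF assms(2)] by (simp add: T2_ring_def)
  have one: "continuous_map X euclideanreal (\<lambda>x. if x \<in> topspace X then 1 else 0)"
    by (rule continuous_map_eq[of X euclideanreal "\<lambda>_. 1"]) auto
  have ag: "abelian_group (T2_ring X)"
    apply (rule abelian_groupI)
    unfolding car apply (simp_all add: T2_ring_def continuous_map_add)
    apply (simp add: algebra_simps)
    apply (simp add: algebra_simps)
    apply (auto simp: fun_eq_iff algebra_simps)
    subgoal for y by (rule exI[of _ "\<lambda>x. - y x"]) (auto intro: continuous_map_minus)
    done
  have cm: "comm_monoid (T2_ring X)"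
    apply (rule comm_monoidI)
    unfolding car apply (simp_all add: T2_ring_def continuous_map_real_mult one)
    apply (auto simp: fun_eq_iff algebra_simps)
    done
  have cr: "cring (T2_ring X)"
    apply (rule cringI[OF ag cm])
    unfolding car by (simp add: T2_ring_def fun_eq_iff algebra_simps)
  have reg: "\<exists>g \<in> carrier (T2_ring X). f = f \<otimes>\<^bsub>T2_ring X\<^esub> f \<otimes>\<^bsub>T2_ring X\<^esub> g"
    if "f \<in> carrier (T2_ring X)" for f
  proof -
    have f0: "\<forall>x. x \<notin> topspace X \<longrightarrow> f x = 0" and fc: "continuous_map X euclideanreal f"
      using that car by auto
    let ?S = "{x \<in> topspace X. f x \<noteq> 0}"
    have cz: "cozero_set X ?S" unfolding cozero_set_def using fc by blast
    have Scl: "closedin X ?S" by (rule cozero_closed[OF assms(2) cz])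
    have Sop: "openin X ?S"
      using openin_continuous_map_preimage[OF fc, of "- {0}"] by (auto simp: vimage_def Int_def)
    define g where "g = (\<lambda>x. if f x \<noteq> 0 then 1 / f x else (0::real))"
    have gc: "continuous_map X euclideanreal g"
      unfolding g_def
    proof (rule continuous_map_cases_alt)
      show "continuous_map (subtopology X (X closure_of ?S)) euclideanreal (\<lambda>x. 1 / f x)"
        unfolding closure_of_closedin[OF Scl]
        by (intro continuous_map_real_divide continuous_map_from_subtopology fc) auto
      show "continuous_map (subtopology X (X closure_of {x \<in> topspace X. \<not> f x \<noteq> 0})) euclideanreal (\<lambda>x. 0)"
        by simp
      have "X frontier_of ?S = {}" using frontier_of_eq_empty[of ?S X] Scl Sop by auto
      thus "\<And>x. x \<in> X frontier_of ?S \<Longrightarrow> 1 / f x = 0" by auto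
    qed
    have "g \<in> carrier (T2_ring X)" using car gc f0 by (auto simp: g_def)
    moreover have "f = f \<otimes>\<^bsub>T2_ring X\<^esub> f \<otimes>\<^bsub>T2_ring X\<^esub> g"
      by (auto simp: T2_ring_def g_def fun_eq_iff)
    ultimately show ?thesis by blast
  qed
  show ?thesis unfolding regular_ring_def using cr reg by blast
qed

end
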